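(* Let $d\ge2$, $p\in[0,1]$, and let $N_\infty$ be the number of infinite connected components of the hole graph $G(\omega)$. If $1\le k<\infty$ and $P_p(N_\infty=k)=1$, then $k=1$.
   Context: A face is a $(d-1)$-dimensional elementary cube in $\mathbb{R}^d$ (a product of intervals $[l,l]$ or $[l,l+1]$, $l\in\mathbb{Z}$, with exactly one degenerate factor). In face percolation with parameter $p$ each face is open independently with probability $p$ (measure $P_p$); $K(\omega)$ is the union of open faces. The hole graph $G(\omega)$ has as vertices the holes, i.e. the bounded connected components of $\mathbb{R}^d\setminus K(\omega)$ (obtained as the limit $\bigcup_n G^n$ of the graphs of bounded components of $\mathbb{R}^d\setminus(K(\omega)\cap[-n,n]^d)$), two holes adjacent iff some face lies in the boundary of both. *)

theory Defs
  imports "HOL-Probability.Probability"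
begin

text \<open>A face is indexed by its lower corner v in Z^d and its degenerate coordinate i:
  it is the product of [v_i,v_i] in coordinate i and [v_j,v_j+1] in every other coordinate j.\<close>

type_synonym 'n face = "(int ^ 'n) \<times> 'n"

definition face_set :: "'n::finite face \<Rightarrow> (real ^ 'n) set" where
  "face_set F = (let v = fst F; i = snd F in
     {x. x $ i = of_int (v $ i) \<and>
         (\<forall>j. j \<noteq> i \<longrightarrow> of_int (v $ j) \<le> x $ j \<and> x $ j \<le> of_int (v $ j) + 1)})"

definition face_perc :: "real \<Rightarrow> ('n::finite face \<Rightarrow> bool) measure" where
  "face_perc p = PiM UNIV (\<lambda>_. measure_pmf (bernoulli_pmf p))"

definition Kset :: "('n::finite face \<Rightarrow> bool) \<Rightarrow> (real ^ 'n) set" where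
  "Kset \<omega> = (\<Union>F\<in>{F. \<omega> F}. face_set F)"

definition holes :: "('n::finite face \<Rightarrow> bool) \<Rightarrow> (real ^ 'n) set set" where
  "holes \<omega> = {H. \<exists>x. x \<notin> Kset \<omega> \<and> H = connected_component_set (- Kset \<omega>) x \<and> bounded H}"

definition hole_edges :: "('n::finite face \<Rightarrow> bool) \<Rightarrow> ((real ^ 'n) set \<times> (real ^ 'n) set) set" where
  "hole_edges \<omega> = {(H1, H2). H1 \<in> holes \<omega> \<and> H2 \<in> holes \<omega> \<and> H1 \<noteq> H2 \<and>
      (\<exists>F. face_set F \<subseteq> frontier H1 \<and> face_set F \<subseteq> frontier H2)}"

definition hole_components :: "('n::finite face \<Rightarrow> bool) \<Rightarrow> (real ^ 'n) set set set" where
  "hole_components \<omega> = holes \<omega> // ((hole_edges \<omega>)\<^sup>*)"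

definition N_inf :: "('n::finite face \<Rightarrow> bool) \<Rightarrow> enat" where
  "N_inf \<omega> = (let S = {C \<in> hole_components \<omega>. infinite C} in
                if finite S then enat (card S) else \<infinity>)"

end

theory Submission
  imports Defs
begin


lemma prob_space_face_perc: "prob_space (face_perc p :: ('n::finite face \<Rightarrow> bool) measure)"
  unfolding face_perc_def by (intro prob_space_PiM prob_space_measure_pmf)

lemma space_face_perc: "space (face_perc p :: ('n::finite face \<Rightarrow> bool) measure) = UNIV"
  unfolding face_perc_def by (simp add: space_PiM)

lemma fe_single:
  fixes F :: "'n::finite face"
  assumes p: "0 < p" "p \<le> 1"
    and N: "N \<in> null_sets (face_perc p :: ('n face \<Rightarrow> bool) measure)"
  shows "{\<omega>. fun_upd \<omega> F True \<in> N} \<in> null_sets (face_perc p :: ('n face \<Rightarrow> bool) measure)"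
proof -
  define Mb where "Mb = measure_pmf (bernoulli_pmf p)"
  define I where "I = UNIV - {F}"
  define PI where "PI = PiM I (\<lambda>_. Mb)"
  define \<nu> where "\<nu> = Mb \<Otimes>\<^sub>M PI"
  define g where "g = (\<lambda>(x::bool, X::'n face \<Rightarrow> bool). X(F := x))"
  have ins: "insert F I = UNIV" unfolding I_def by auto
  have mu: "face_perc p = PiM (insert F I) (\<lambda>_. Mb)"
    unfolding face_perc_def Mb_def ins ..
  have eq: "distr \<nu> (face_perc p) g = face_perc p"
    unfolding mu \<nu>_def PI_def g_def
    by (rule distr_pair_PiM_eq_PiM) (auto simp: Mb_def prob_space_measure_pmf)
  interpret PI: prob_space PI unfolding PI_def Mb_def
    by (intro prob_space_PiM prob_space_measure_pmf)
  interpret Mb: prob_space Mb unfolding Mb_def by (rule prob_space_measure_pmf)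
  interpret pair_sigma_finite Mb PI ..
  have gm: "g \<in> \<nu> \<rightarrow>\<^sub>M face_perc p"
  proof -
    have "(\<lambda>z. (snd z)(F := fst z)) \<in> \<nu> \<rightarrow>\<^sub>M PiM (I \<union> {F}) (\<lambda>_. Mb)"
      unfolding \<nu>_def PI_def
      by (rule measurable_fun_upd[where J=I]) auto
    moreover have "PiM (I \<union> {F}) (\<lambda>_. Mb) = face_perc p" using mu by simp
    moreover have "(\<lambda>z. (snd z)(F := fst z)) = g" unfolding g_def by auto
    ultimately show ?thesis by simp
  qed
  have Nm: "N \<in> sets (face_perc p)" and N0: "emeasure (face_perc p) N = 0" using N by auto
  define NT where "NT x = {X \<in> space PI. X(F := x) \<in> N}" for x
  have NTm: "NT x \<in> sets PI" for x
  proof -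
    have "(\<lambda>X. X(F := x)) \<in> PI \<rightarrow>\<^sub>M face_perc p"
    proof -
      have "(\<lambda>X. X(F := x)) \<in> PI \<rightarrow>\<^sub>M PiM (I \<union> {F}) (\<lambda>_. Mb)"
        unfolding PI_def by (rule measurable_fun_upd[where J=I]) (auto simp: Mb_def)
      then show ?thesis using mu by simp
    qed
    from measurable_sets[OF this Nm] show ?thesis
      unfolding NT_def by (simp add: vimage_def Int_def conj_commute)
  qed
  have pre: "g -` N \<inter> space \<nu> \<in> sets \<nu>" using gm Nm by (rule measurable_sets)
  have "emeasure \<nu> (g -` N \<inter> space \<nu>) = 0"
    using N0 eq emeasure_distr[OF gm Nm] by simp
  moreover have "emeasure \<nu> (g -` N \<inter> space \<nu>) = (\<integral>\<^sup>+x. emeasure PI (Pair x -` (g -` N \<inter> space \<nu>)) \<partial>Mb)"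
    unfolding \<nu>_def by (rule PI.emeasure_pair_measure_alt) (use pre in \<open>simp add: \<nu>_def\<close>)
  moreover have "Pair x -` (g -` N \<inter> space \<nu>) = NT x" for x
    by (auto simp: NT_def g_def \<nu>_def space_pair_measure Mb_def)
  ultimately have "(\<integral>\<^sup>+x. emeasure PI (NT x) \<partial>Mb) = 0" by simp
  then have "AE x in Mb. emeasure PI (NT x) = 0"
    by (subst (asm) nn_integral_0_iff_AE) (auto simp: Mb_def)
  then have "emeasure PI (NT True) = 0"
    unfolding Mb_def AE_measure_pmf_iff using p by (auto simp: set_pmf_iff)
  have "{\<omega>. fun_upd \<omega> F True \<in> N} \<in> sets (face_perc p)"
  proof -
    have "(\<lambda>\<omega>. fun_upd \<omega> F True) \<in> face_perc p \<rightarrow>\<^sub>M face_perc p"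
      unfolding mu
      by (rule measurable_fun_upd[where J="insert F I"]) (auto simp: Mb_def)
    from measurable_sets[OF this Nm] show ?thesis by (simp add: space_face_perc vimage_def)
  qed
  moreover
  have "emeasure (face_perc p) {\<omega>. fun_upd \<omega> F True \<in> N} = 0"
  proof -
    have "emeasure (face_perc p) {\<omega>. fun_upd \<omega> F True \<in> N} = emeasure (distr \<nu> (face_perc p) g) {\<omega>. fun_upd \<omega> F True \<in> N}"
      using eq by simp
    also have "\<dots> = emeasure \<nu> (g -` {\<omega>. fun_upd \<omega> F True \<in> N} \<inter> space \<nu>)"
      by (rule emeasure_distr[OF gm]) fact
    also have "g -` {\<omega>. fun_upd \<omega> F True \<in> N} \<inter> space \<nu> = space Mb \<times> NT True"
      by (auto simp: NT_def g_def \<nu>_def space_pair_measure Mb_def)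
    also have "emeasure \<nu> (space Mb \<times> NT True) = emeasure Mb (space Mb) * emeasure PI (NT True)"
      unfolding \<nu>_def by (rule PI.emeasure_pair_measure_Times) (auto simp: NTm)
    finally show ?thesis using \<open>emeasure PI (NT True) = 0\<close> by (simp add: fun_upd_def)
  qed
  ultimately show ?thesis by auto
qed

lemma fe_AE_single:
  fixes F :: "'n::finite face"
  assumes p: "0 < p" "p \<le> 1"
    and AE: "AE \<omega> in (face_perc p :: ('n face \<Rightarrow> bool) measure). P \<omega>"
  shows "AE \<omega> in (face_perc p :: ('n face \<Rightarrow> bool) measure). P (fun_upd \<omega> F True)"
proof -
  from AE obtain N where N: "{\<omega> \<in> space (face_perc p). \<not> P \<omega>} \<subseteq> N" "N \<in> null_sets (face_perc p :: ('n face \<Rightarrow> bool) measure)"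
    by (auto elim!: AE_E)
  have "{\<omega>. fun_upd \<omega> F True \<in> N} \<in> null_sets (face_perc p :: ('n face \<Rightarrow> bool) measure)"
    by (rule fe_single[OF p N(2)])
  moreover have "{\<omega> \<in> space (face_perc p). \<not> P (fun_upd \<omega> F True)} \<subseteq> {\<omega>. fun_upd \<omega> F True \<in> N}"
    using N(1) by (auto simp: space_face_perc)
  ultimately show ?thesis by (rule AE_I')
qed

lemma fe_AE_finite:
  fixes S :: "'n::finite face set"
  assumes p: "0 < p" "p \<le> 1" and S: "finite S"
  shows "AE \<omega> in (face_perc p :: ('n face \<Rightarrow> bool) measure). P \<omega> \<Longrightarrow>
         AE \<omega> in (face_perc p :: ('n face \<Rightarrow> bool) measure). P (\<lambda>G. G \<in> S \<or> \<omega> G)"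
  using S
proof (induction S arbitrary: P rule: finite_induct)
  case empty
  then show ?case by simp
next
  case (insert a S)
  have "AE \<omega> in (face_perc p :: ('n face \<Rightarrow> bool) measure). P (\<lambda>G. G \<in> S \<or> \<omega> G)"
    using insert.IH insert.prems by blast
  then have "AE \<omega> in (face_perc p :: ('n face \<Rightarrow> bool) measure). P (\<lambda>G. G \<in> S \<or> (fun_upd \<omega> a True) G)"
    by (rule fe_AE_single[OF p, where P="\<lambda>\<omega>. P (\<lambda>G. G \<in> S \<or> \<omega> G)"])
  moreover have "(\<lambda>G. G \<in> S \<or> (fun_upd \<omega> a True) G) = (\<lambda>G. G \<in> insert a S \<or> \<omega> G)" for \<omega> :: "'n face \<Rightarrow> bool"
    by auto
  ultimately show ?case by simp
qed



definition cube :: "int ^ 'n::finite \<Rightarrow> (real ^ 'n) set" where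
  "cube c = {x. \<forall>j. of_int (c$j) < x$j \<and> x$j < of_int (c$j) + 1}"

definition Bx :: "int \<Rightarrow> (real ^ 'n::finite) set" where
  "Bx n = {x. \<forall>j. \<bar>x$j\<bar> \<le> of_int n}"

definition inB :: "int \<Rightarrow> 'n::finite face \<Rightarrow> bool" where
  "inB n F = (\<forall>j. - n \<le> fst F $ j \<and> fst F $ j \<le> (if j = snd F then n else n - 1))"

definition boxc :: "int \<Rightarrow> int ^ 'n::finite \<Rightarrow> bool" where
  "boxc n c = (\<forall>j. - n \<le> c$j \<and> c$j \<le> n - 1)"

definition BF :: "int \<Rightarrow> (real ^ 'n::finite) set" where
  "BF n = (\<Union>F\<in>{F::'n face. inB n F}. face_set F)"

definition ev :: "'n::finite \<Rightarrow> int ^ 'n" where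
  "ev i = (\<chi> j. if j = i then 1 else 0)"

lemma face_set_iff: "x \<in> face_set (v, i) \<longleftrightarrow> x$i = of_int (v$i) \<and>
   (\<forall>j. j \<noteq> i \<longrightarrow> of_int (v$j) \<le> x$j \<and> x$j \<le> of_int (v$j) + 1)"
  by (simp add: face_set_def)

lemma face_set_bounds: "y \<in> face_set F \<Longrightarrow> of_int (fst F $ j) \<le> y$j \<and> y$j \<le> of_int (fst F $ j) + 1"
proof (cases F)
  case (Pair v i)
  assume "y \<in> face_set F"
  then have "y$i = of_int (v$i)" "\<forall>j. j \<noteq> i \<longrightarrow> of_int (v$j) \<le> y$j \<and> y$j \<le> of_int (v$j) + 1"
    using Pair by (simp_all add: face_set_iff)
  then show ?thesis using Pair by (cases "j = i") auto
qed

lemma cube_box: "cube c = box (\<chi> j. of_int (c$j)) (\<chi> j. of_int (c$j) + 1)"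
  by (auto simp: cube_def mem_box_cart)

lemma cube_nonempty: "cube c \<noteq> {}"
proof -
  have "(\<chi> j. of_int (c$j) + 1/2) \<in> cube c" by (auto simp: cube_def)
  then show ?thesis by auto
qed

lemma open_cube: "open (cube c)" by (simp add: cube_box open_box)
lemma connected_cube: "connected (cube c)" by (simp add: cube_box convex_connected)
lemma bounded_cube: "bounded (cube c)" by (simp add: cube_box)

lemma closure_cube: "closure (cube c) = {x. \<forall>j. of_int (c$j) \<le> x$j \<and> x$j \<le> of_int (c$j) + 1}"
  using cube_nonempty[of c] unfolding cube_box
  by (subst closure_box) (auto simp: mem_box_cart)

lemma cube_face_disj: "cube c \<inter> face_set F = {}"
proof (cases F)
  case (Pair v i)
  { fix x assume "x \<in> cube c" "x \<in> face_set (v,i)"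
    then have a: "\<forall>j. of_int (c$j) < x$j \<and> x$j < of_int (c$j) + 1" and b: "x$i = of_int (v$i)"
      by (auto simp: cube_def face_set_iff)
    from a[rule_format, of i] have a: "of_int (c$i) < x$i" "x$i < of_int (c$i) + 1" by auto
    have r1: "real_of_int (c$i) < real_of_int (v$i)" using a b by linarith
    have r2: "real_of_int (v$i) < real_of_int (c$i) + 1" using a b by linarith
    from r1 have "c$i < v$i" by simp
    moreover from r2 have "v$i < c$i + 1" by (metis of_int_1 of_int_add of_int_less_iff)
    ultimately have False by linarith }
  then show ?thesis using Pair by auto
qed

lemma cube_Kset: "cube c \<inter> Kset \<omega> = {}"
  using cube_face_disj by (auto simp: Kset_def)

lemma closed_face: fixes F :: "'n::finite face" shows "closed (face_set F)"
proof (cases F)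
  case (Pair v i)
  have eq: "face_set (v,i) = {x. x$i = of_int (v$i)} \<inter> (\<Inter>j\<in>UNIV - {i}. {x. of_int (v$j) \<le> x$j} \<inter> {x. x$j \<le> of_int (v$j) + 1})"
    by (auto simp: face_set_iff)
  have c1: "closed {x::real^'n. x$i = of_int (v$i)}"
  proof -
    have "{x::real^'n. x$i = of_int (v$i)} = {x. of_int (v$i) \<le> x$i} \<inter> {x. x$i \<le> of_int (v$i)}" by auto
    then show ?thesis by (simp add: closed_Int closed_halfspace_component_ge_cart closed_halfspace_component_le_cart)
  qed
  have c2: "closed (\<Inter>j\<in>UNIV - {i}. {x::real^'n. of_int (v$j) \<le> x$j} \<inter> {x. x$j \<le> of_int (v$j) + 1})"
    by (intro closed_INT ballI closed_Int closed_halfspace_component_ge_cart closed_halfspace_component_le_cart)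
  show ?thesis unfolding Pair eq using c1 c2 by (rule closed_Int)
qed

lemma finite_int_vecs: "finite {v :: int ^ 'n::finite. \<forall>j. a \<le> v$j \<and> v$j \<le> b}"
proof -
  have "{v :: int ^ 'n. \<forall>j. a \<le> v$j \<and> v$j \<le> b} \<subseteq> vec_lambda ` (PiE UNIV (\<lambda>_. {a..b}))"
  proof
    fix v :: "int^'n" assume "v \<in> {v. \<forall>j. a \<le> v$j \<and> v$j \<le> b}"
    then have "vec_nth v \<in> PiE UNIV (\<lambda>_. {a..b})" by auto
    then show "v \<in> vec_lambda ` (PiE UNIV (\<lambda>_. {a..b}))"
      by (metis image_eqI vec_nth_inverse)
  qed
  moreover have "finite (PiE (UNIV::'n set) (\<lambda>_. {a..b::int}))" by (intro finite_PiE) auto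
  ultimately show ?thesis by (meson finite_imageI finite_subset)
qed

lemma finite_faces_near: "finite {F :: 'n::finite face. \<forall>j. a \<le> fst F $ j \<and> fst F $ j \<le> b}"
proof -
  have "{F :: 'n face. \<forall>j. a \<le> fst F $ j \<and> fst F $ j \<le> b} = {v. \<forall>j. a \<le> v$j \<and> v$j \<le> b} \<times> UNIV"
    by auto
  moreover have "finite ({v :: int ^ 'n. \<forall>j. a \<le> v$j \<and> v$j \<le> b} \<times> (UNIV :: 'n set))"
    by (intro finite_SigmaI finite_int_vecs) simp
  ultimately show ?thesis by simp
qed

lemma inB_bounds: "inB n F \<Longrightarrow> - n \<le> fst F $ j \<and> fst F $ j \<le> n"
  unfolding inB_def by (erule allE[of _ j]) (auto split: if_splits)

lemma finite_inB: "finite {F :: 'n::finite face. inB n F}"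
  by (rule finite_subset[OF _ finite_faces_near[of "-n" n]]) (use inB_bounds in blast)

lemma open_compl_Kset: fixes \<omega> :: "'n::finite face \<Rightarrow> bool" shows "open (- Kset \<omega>)"
  unfolding open_dist
proof (intro ballI)
  fix x :: "real^'n" assume x: "x \<in> - Kset \<omega>"
  define S where "S = {F :: 'n face. \<forall>j. \<lfloor>x$j\<rfloor> - 2 \<le> fst F $ j \<and> fst F $ j \<le> \<lfloor>x$j\<rfloor> + 2}"
  define C where "C = (\<Union>F\<in>{F\<in>S. \<omega> F}. face_set F)"
  define R where "R = range (\<lambda>j. \<lfloor>x$j\<rfloor>)"
  have fR: "finite R" unfolding R_def by simp
  have mm: "Min R \<le> \<lfloor>x$j\<rfloor>" "\<lfloor>x$j\<rfloor> \<le> Max R" for j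
    using fR by (auto intro!: Min_le Max_ge simp: R_def)
  have "finite S" unfolding S_def
  proof (rule finite_subset[OF _ finite_faces_near[of "Min R - 2" "Max R + 2"]])
    show "{F::'n face. \<forall>j. \<lfloor>x $ j\<rfloor> - 2 \<le> fst F $ j \<and> fst F $ j \<le> \<lfloor>x $ j\<rfloor> + 2}
      \<subseteq> {F. \<forall>j. Min R - 2 \<le> fst F $ j \<and> fst F $ j \<le> Max R + 2}"
    proof -
      { fix F :: "'n face" and j assume H: "\<forall>j. \<lfloor>x$j\<rfloor> - 2 \<le> fst F $ j \<and> fst F $ j \<le> \<lfloor>x$j\<rfloor> + 2"
        then have "\<lfloor>x$j\<rfloor> - 2 \<le> fst F $ j" "fst F $ j \<le> \<lfloor>x$j\<rfloor> + 2" by auto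
        then have "Min R - 2 \<le> fst F $ j \<and> fst F $ j \<le> Max R + 2" using mm[of j] by linarith }
      then show ?thesis by blast
    qed
  qed
  then have "closed C" unfolding C_def by (auto intro!: closed_UN closed_face)
  moreover have "x \<notin> C" using x by (auto simp: C_def Kset_def)
  ultimately have "open (-C)" "x \<in> -C" by (auto simp: open_Compl)
  then obtain e where e: "e > 0" "\<forall>y. dist y x < e \<longrightarrow> y \<in> -C"
    unfolding open_dist by blast
  show "\<exists>e>0. \<forall>y. dist y x < e \<longrightarrow> y \<in> - Kset \<omega>"
  proof (intro exI[of _ "min e (1/2)"] conjI allI impI)
    fix y assume y: "dist y x < min e (1/2)"
    show "y \<in> - Kset \<omega>"
    proof
      assume "y \<in> Kset \<omega>"
      then obtain F where F: "\<omega> F" "y \<in> face_set F" by (auto simp: Kset_def)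
      obtain v i where Fv: "F = (v,i)" by fastforce
      have ny: "norm (y - x) < 1/2" using y by (simp add: dist_norm)
      have yx: "\<bar>y$j - x$j\<bar> < 1/2" for j
      proof -
        have "\<bar>(y - x)$j\<bar> \<le> norm (y - x)" by (rule component_le_norm_cart)
        then show ?thesis using ny by simp
      qed
      have "F \<in> S"
      proof -
        { fix j
          have h1: "real_of_int (v$j) \<le> y$j" "y$j \<le> real_of_int (v$j) + 1"
            using face_set_bounds[OF F(2), of j] Fv by auto
          have h2: "real_of_int \<lfloor>x$j\<rfloor> \<le> x$j" "x$j < real_of_int \<lfloor>x$j\<rfloor> + 1"
            by (rule of_int_floor_le, rule real_of_int_floor_add_one_gt)
          have h3: "y$j - x$j < 1/2" "x$j - y$j < 1/2" using yx[of j] by (smt (verit))+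
          have "real_of_int (v$j) < real_of_int (\<lfloor>x$j\<rfloor> + 2)"
            by (simp only: of_int_add of_int_numeral) (use h1 h2 h3 in linarith)
          then have 1: "v$j < \<lfloor>x$j\<rfloor> + 2" by (simp only: of_int_less_iff)
          have "real_of_int (\<lfloor>x$j\<rfloor> - 2) < real_of_int (v$j)"
            by (simp only: of_int_diff of_int_numeral) (use h1 h2 h3 in linarith)
          then have 2: "\<lfloor>x$j\<rfloor> - 2 < v$j" by (simp only: of_int_less_iff)
          from 1 2 have "\<lfloor>x$j\<rfloor> - 2 \<le> v$j \<and> v$j \<le> \<lfloor>x$j\<rfloor> + 2" by simp
        }
        then show ?thesis using Fv by (auto simp: S_def)
      qed
      then have "y \<in> C" unfolding C_def using F by blast
      moreover have "dist y x < e" using y by simp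
      ultimately show False using e(2) by auto
    qed
  qed (simp add: e(1))
qed

lemma closed_Kset: "closed (Kset \<omega>)"
  using open_compl_Kset by (simp add: closed_open)



lemma dist_comp_lt: "dist (y::real^'n::finite) c < r \<Longrightarrow> \<bar>y$j - c$j\<bar> < r"
proof -
  assume a: "dist y c < r"
  have "\<bar>(y - c)$j\<bar> \<le> norm (y - c)" by (rule component_le_norm_cart)
  then show ?thesis using a by (simp add: dist_norm)
qed

lemma abs_lt_D: "\<bar>a - b\<bar> < (r::real) \<Longrightarrow> b - r < a \<and> a < b + r"
  by (simp add: abs_diff_less_iff)

lemma ev_nth: "ev i $ j = (if j = i then 1 else 0)"
  by (simp add: ev_def)

lemma face_closure_cube1: "face_set (v,i) \<subseteq> closure (cube v)"
proof
  fix x assume x: "x \<in> face_set (v,i)"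
  have "of_int (v$j) \<le> x$j \<and> x$j \<le> of_int (v$j) + 1" for j
    using face_set_bounds[OF x, of j] by simp
  then show "x \<in> closure (cube v)" unfolding closure_cube by simp
qed

lemma face_closure_cube2: "face_set (v,i) \<subseteq> closure (cube (v - ev i))"
proof
  fix x assume x: "x \<in> face_set (v,i)"
  have xi: "x$i = of_int (v$i)" using x by (simp add: face_set_iff)
  have "of_int ((v - ev i)$j) \<le> x$j \<and> x$j \<le> of_int ((v - ev i)$j) + 1" for j
  proof (cases "j = i")
    case True then show ?thesis using xi by (simp add: ev_nth)
  next
    case False then show ?thesis using face_set_bounds[OF x, of j] by (simp add: ev_nth)
  qed
  then show "x \<in> closure (cube (v - ev i))" unfolding closure_cube by simp
qed

lemma cube_side:
  assumes H: "open H" "face_set (v,i) \<subseteq> closure H" "H \<inter> face_set (v,i) = {}"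
  shows "H \<inter> cube v \<noteq> {} \<or> H \<inter> cube (v - ev i) \<noteq> {}"
proof -
  define c :: "real^'a" where "c = (\<chi> j. if j = i then of_int (v$i) else of_int (v$j) + 1/2)"
  have "c \<in> face_set (v,i)" by (simp add: c_def face_set_iff)
  then have "c \<in> closure H" using H by auto
  then have ap: "\<forall>e>0. \<exists>y\<in>H. dist y c < e" by (simp add: closure_approachable)
  have "(1/2::real) > 0" by simp
  with ap obtain y where y: "y \<in> H" "dist y c < 1/2" by blast
  have yc: "\<bar>y$j - c$j\<bar> < 1/2" for j by (rule dist_comp_lt[OF y(2)])
  have oth: "of_int (v$j) < y$j \<and> y$j < of_int (v$j) + 1" if "j \<noteq> i" for j
  proof -
    have "c$j = of_int (v$j) + 1/2" using that by (simp add: c_def)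
    with abs_lt_D[OF yc[of j]] show ?thesis by linarith
  qed
  have ci: "c$i = of_int (v$i)" by (simp add: c_def)
  consider "y$i = of_int (v$i)" | "y$i > of_int (v$i)" | "y$i < of_int (v$i)" by linarith
  then show ?thesis
  proof cases
    case 1
    then have "y \<in> face_set (v,i)" using oth by (auto simp: face_set_iff less_imp_le)
    then show ?thesis using y H(3) by auto
  next
    case 2
    have "y \<in> cube v" unfolding cube_def
    proof (intro CollectI allI)
      fix j show "of_int (v$j) < y$j \<and> y$j < of_int (v$j) + 1"
      proof (cases "j = i")
        case True show ?thesis unfolding True using 2 abs_lt_D[OF yc[of i]] ci by linarith
      qed (rule oth)
    qed
    then show ?thesis using y by auto
  next
    case 3
    have "y \<in> cube (v - ev i)" unfolding cube_def
    proof (intro CollectI allI)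
      fix j show "of_int ((v - ev i)$j) < y$j \<and> y$j < of_int ((v - ev i)$j) + 1"
      proof (cases "j = i")
        case True
        have "of_int ((v - ev i)$i) = real_of_int (v$i) - 1" by (simp add: ev_nth)
        then show ?thesis unfolding True using 3 abs_lt_D[OF yc[of i]] ci by linarith
      next
        case False then show ?thesis using oth[OF False] by (simp add: ev_nth)
      qed
    qed
    then show ?thesis using y by auto
  qed
qed

lemma Bx_nth: "x \<in> Bx n \<Longrightarrow> - of_int n \<le> x$j \<and> x$j \<le> of_int n"
  unfolding Bx_def by (drule CollectD, drule spec[of _ j]) (simp add: abs_le_iff)

lemma Bx_I: assumes h: "\<And>j. - of_int n \<le> x$j \<and> x$j \<le> of_int n" shows "x \<in> Bx n"
  unfolding Bx_def
proof (intro CollectI allI)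
  fix j show "\<bar>x$j\<bar> \<le> of_int n" using h[of j] by (simp add: abs_le_iff)
qed

lemma int_le_real1: "(a::int) + 1 \<le> b \<Longrightarrow> real_of_int a + 1 \<le> real_of_int b"
proof -
  assume "a + 1 \<le> b"
  then have "real_of_int (a + 1) \<le> real_of_int b" by (simp only: of_int_le_iff)
  then show ?thesis by simp
qed

lemma inB_nth: "inB n (v,i) \<Longrightarrow> j \<noteq> i \<Longrightarrow> - n \<le> v$j \<and> v$j \<le> n - 1"
  unfolding inB_def by (drule spec[of _ j]) simp

lemma BF_sub: "BF n \<subseteq> Bx n"
proof
  fix x assume "x \<in> BF n"
  then obtain F where F: "inB n F" "x \<in> face_set F" by (auto simp: BF_def)
  obtain v i where Fv: "F = (v,i)" by fastforce
  have "\<bar>x$j\<bar> \<le> of_int n" for j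
  proof (cases "j = i")
    case True
    then have "x$j = of_int (v$j)" using F Fv by (simp add: face_set_iff)
    moreover have "- n \<le> v$j" "v$j \<le> n" using inB_bounds[OF F(1), of j] Fv by auto
    ultimately show ?thesis by simp
  next
    case False
    have "- n \<le> v$j" "v$j \<le> n - 1" using inB_nth[of n v i j] F(1) Fv False by auto
    moreover have "of_int (v$j) \<le> x$j \<and> x$j \<le> of_int (v$j) + 1" using face_set_bounds[OF F(2), of j] Fv by simp
    ultimately show ?thesis
      by (smt (verit, ccfv_SIG) of_int_diff of_int_le_iff of_int_minus of_int_1)
  qed
  then show "x \<in> Bx n" unfolding Bx_def by blast
qed

lemma int_coord_in_BF:
  assumes n: "1 \<le> n" and x: "x \<in> Bx n" and xi: "x$i \<in> \<int>"
  shows "x \<in> BF n"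
proof -
  define v :: "int^'a" where "v = (\<chi> j. if j = i then \<lfloor>x$i\<rfloor> else min \<lfloor>x$j\<rfloor> (n - 1))"
  have xb: "- of_int n \<le> x$j \<and> x$j \<le> of_int n" for j using Bx_nth[OF x] by blast
  have "inB n (v,i)" unfolding inB_def
  proof (intro allI)
    fix j
    show "- n \<le> fst (v, i) $ j \<and> fst (v, i) $ j \<le> (if j = snd (v, i) then n else n - 1)"
    proof (cases "j = i")
      case True
      then show ?thesis using xb[of i] by (simp add: v_def le_floor_iff floor_le_iff)
    next
      case False
      then show ?thesis using xb[of j] n by (simp add: v_def le_floor_iff)
    qed
  qed
  moreover have "x \<in> face_set (v,i)"
    unfolding face_set_iff
  proof (rule conjI)
    show "x$i = of_int (v$i)" using xi by (simp add: v_def of_int_floor)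
  next
    show "\<forall>j. j \<noteq> i \<longrightarrow> of_int (v$j) \<le> x$j \<and> x$j \<le> of_int (v$j) + 1"
    proof (intro allI impI)
    fix j assume "j \<noteq> i"
    then have vj: "v$j = min \<lfloor>x$j\<rfloor> (n - 1)" by (simp add: v_def)
    show "of_int (v$j) \<le> x$j \<and> x$j \<le> of_int (v$j) + 1"
    proof (cases "\<lfloor>x$j\<rfloor> \<le> n - 1")
      case True
      then have "v$j = \<lfloor>x$j\<rfloor>" using vj by simp
      then show ?thesis by (simp add: of_int_floor_le real_of_int_floor_add_one_ge)
    next
      case False
      then have "v$j = n - 1" using vj by simp
      moreover have "of_int n \<le> x$j" using False by (meson floor_le_iff not_le zle_diff1_eq le_floor_iff)
      ultimately show ?thesis using xb[of j] by simp
    qed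
    qed
  qed
  ultimately show ?thesis unfolding BF_def by blast
qed

lemma nonint_cube:
  assumes x: "x \<in> Bx n" and ni: "\<forall>j. x$j \<notin> \<int>"
  shows "boxc n (\<chi> j. \<lfloor>x$j\<rfloor>) \<and> x \<in> cube (\<chi> j. \<lfloor>x$j\<rfloor>)"
proof
  have xb: "- of_int n \<le> x$j \<and> x$j \<le> of_int n" for j using Bx_nth[OF x] by blast
  have xne: "x$j \<noteq> of_int m" for j m using ni by (metis Ints_of_int)
  show "boxc n (\<chi> j. \<lfloor>x$j\<rfloor>)" unfolding boxc_def
  proof (intro allI)
    fix j
    have "x$j < of_int n" using xb[of j] xne[of j n] by linarith
    then have "\<lfloor>x$j\<rfloor> < n" by (simp add: floor_less_iff)
    then show "- n \<le> (\<chi> j. \<lfloor>x$j\<rfloor>) $ j \<and> (\<chi> j. \<lfloor>x$j\<rfloor>) $ j \<le> n - 1"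
      using xb[of j] by (simp add: le_floor_iff)
  qed
  show "x \<in> cube (\<chi> j. \<lfloor>x$j\<rfloor>)" unfolding cube_def
  proof (intro CollectI allI)
    fix j
    have "of_int \<lfloor>x$j\<rfloor> \<noteq> x$j" using xne by metis
    then have "of_int \<lfloor>x$j\<rfloor> < x$j" using of_int_floor_le[of "x$j"] by linarith
    then show "of_int ((\<chi> j. \<lfloor>x$j\<rfloor>) $ j) < x$j \<and> x$j < of_int ((\<chi> j. \<lfloor>x$j\<rfloor>) $ j) + 1"
      by (simp add: real_of_int_floor_add_one_gt)
  qed
qed

lemma cube_out:
  assumes "\<not> boxc n c" shows "cube c \<inter> Bx n = {}"
proof -
  from assms obtain j where "\<not> (- n \<le> c$j \<and> c$j \<le> n - 1)" unfolding boxc_def by blast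
  then have j: "c$j < - n \<or> c$j > n - 1" by linarith
  { fix x assume x: "x \<in> cube c" "x \<in> Bx n"
    then have "of_int (c$j) < x$j" "x$j < of_int (c$j) + 1" by (auto simp: cube_def)
    moreover have "- of_int n \<le> x$j" "x$j \<le> of_int n" using Bx_nth[OF x(2)] by blast+
    moreover have "real_of_int (c$j) + 1 \<le> - of_int n \<or> real_of_int (c$j) \<ge> of_int n"
    proof (cases "c$j < - n")
      case True then have "c$j + 1 \<le> - n" by linarith
      from int_le_real1[OF this] show ?thesis by simp
    next
      case False then have "n \<le> c$j" using j by linarith
      then show ?thesis by simp
    qed
    ultimately have False by linarith }
  then show ?thesis by blast
qed

lemma boxc_closure_sub: assumes "boxc n c" shows "closure (cube c) \<subseteq> Bx n"
proof
  fix x assume "x \<in> closure (cube c)"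
  then have x: "of_int (c$j) \<le> x$j \<and> x$j \<le> of_int (c$j) + 1" for j by (auto simp: closure_cube)
  have "- n \<le> c$j" "c$j \<le> n - 1" for j using assms by (auto simp: boxc_def)
  then have "- of_int n \<le> real_of_int (c$j)" "real_of_int (c$j) + 1 \<le> of_int n" for j
  proof -
    show "- of_int n \<le> real_of_int (c$j)" using \<open>- n \<le> c$j\<close> by simp
    have "c$j + 1 \<le> n" using \<open>c$j \<le> n - 1\<close> by linarith
    then show "real_of_int (c$j) + 1 \<le> of_int n" by (rule int_le_real1)
  qed
  then show "x \<in> Bx n" using x by (intro Bx_I) (smt (verit))
qed

lemma boxc_n: "boxc n c \<Longrightarrow> 1 \<le> n"
  unfolding boxc_def by (erule allE[where x=undefined]) linarith

lemma boxc_frontier: assumes "boxc n c" shows "closure (cube c) - cube c \<subseteq> BF n"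
proof
  fix x assume x: "x \<in> closure (cube c) - cube c"
  then have xc: "of_int (c$j) \<le> x$j \<and> x$j \<le> of_int (c$j) + 1" for j by (auto simp: closure_cube)
  from x obtain j where "\<not> (of_int (c$j) < x$j \<and> x$j < of_int (c$j) + 1)" by (auto simp: cube_def)
  then have "x$j = of_int (c$j) \<or> x$j = of_int (c$j + 1)" using xc[of j] by auto
  then have "x$j \<in> \<int>" by (metis Ints_of_int)
  then show "x \<in> BF n" using int_coord_in_BF[OF boxc_n[OF assms]] boxc_closure_sub[OF assms] x by auto
qed

lemma cube_disj: "c \<noteq> c' \<Longrightarrow> cube c \<inter> cube c' = {}"
proof -
  assume "c \<noteq> c'"
  then obtain j where j: "c$j \<noteq> c'$j" by (metis vec_eq_iff)
  { fix x assume "x \<in> cube c" "x \<in> cube c'"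
    then have "of_int (c$j) < x$j" "x$j < of_int (c$j) + 1" "of_int (c'$j) < x$j" "x$j < of_int (c'$j) + 1"
      by (auto simp: cube_def)
    then have "real_of_int (c$j) < of_int (c'$j) + 1" "real_of_int (c'$j) < of_int (c$j) + 1" by linarith+
    then have "c$j < c'$j + 1" "c'$j < c$j + 1" by (metis of_int_1 of_int_add of_int_less_iff)+
    with j have False by linarith }
  then show ?thesis by blast
qed



definition Tn :: "int \<Rightarrow> ('n::finite face \<Rightarrow> bool) \<Rightarrow> ('n face \<Rightarrow> bool)" where
  "Tn n \<omega> = (\<lambda>G. G \<in> {F. inB n F} \<or> \<omega> G)"

lemma Kset_Tn: "Kset (Tn n \<omega>) = Kset \<omega> \<union> BF n"
  unfolding Kset_def BF_def Tn_def by blast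

lemma conn_split:
  assumes "connected S" "S \<subseteq> A \<union> B" "open A" "open B" "A \<inter> B = {}" "x \<in> S" "x \<in> A"
  shows "S \<subseteq> A"
proof -
  have "A \<inter> S = {} \<or> B \<inter> S = {}"
    using connectedD[OF assms(1,3,4)] assms(2,5) by blast
  then show ?thesis using assms(2,6,7) by blast
qed

lemma Bx_cbox: "Bx n = cbox (\<chi> j. - of_int n) (\<chi> j. of_int n)"
proof
  show "Bx n \<subseteq> cbox (\<chi> j. - of_int n) (\<chi> j. of_int n)"
  proof
    fix x assume x: "x \<in> Bx n"
    show "x \<in> cbox (\<chi> j. - of_int n) (\<chi> j. of_int n)"
      unfolding mem_box_cart using Bx_nth[OF x] by simp
  qed
  show "cbox (\<chi> j. - of_int n) (\<chi> j. of_int n) \<subseteq> Bx n"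
    by (rule subsetI, rule Bx_I) (simp add: mem_box_cart)
qed

lemma closed_Bx: "closed (Bx n)" by (simp add: Bx_cbox closed_cbox)
lemma bounded_Bx: "bounded (Bx n)" by (simp add: Bx_cbox bounded_cbox)

lemma mem_ccs: "x \<in> S \<Longrightarrow> x \<in> connected_component_set S x"
  by (simp add: connected_component_refl)

lemma cube_sub_compl: "cube c \<subseteq> - (Kset \<omega> \<union> BF n)"
  using cube_Kset[of c \<omega>] cube_face_disj[of c] by (auto simp: BF_def)

lemma cc_box:
  assumes c: "boxc n c" and x: "x \<in> cube c"
  shows "connected_component_set (- (Kset \<omega> \<union> BF n)) x = cube c"
proof
  show "cube c \<subseteq> connected_component_set (- (Kset \<omega> \<union> BF n)) x"
    by (rule connected_component_maximal[OF x connected_cube cube_sub_compl])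
  have xS: "x \<in> - (Kset \<omega> \<union> BF n)" using x cube_sub_compl by blast
  show "connected_component_set (- (Kset \<omega> \<union> BF n)) x \<subseteq> cube c"
  proof (rule conn_split[where B="- closure (cube c)"])
    show "connected (connected_component_set (- (Kset \<omega> \<union> BF n)) x)" by simp
    show "connected_component_set (- (Kset \<omega> \<union> BF n)) x \<subseteq> cube c \<union> - closure (cube c)"
      using boxc_frontier[OF c] connected_component_subset[of "- (Kset \<omega> \<union> BF n)" x] by blast
    show "cube c \<inter> - closure (cube c) = {}" using closure_subset by blast
  qed (use x xS mem_ccs open_cube in auto)
qed

definition Wset :: "int \<Rightarrow> ('n::finite face \<Rightarrow> bool) \<Rightarrow> (real^'n) set" where
  "Wset n \<omega> = - (Kset \<omega> \<union> Bx n)"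

lemma open_Wset: "open (Wset n \<omega>)"
proof -
  have "Wset n \<omega> = - Kset \<omega> \<inter> - Bx n" by (auto simp: Wset_def)
  then show ?thesis using open_Int[OF open_compl_Kset[of \<omega>] open_Compl[OF closed_Bx[of n]]] by simp
qed

lemma Wset_sub: "Wset n \<omega> \<subseteq> - (Kset \<omega> \<union> BF n)"
  using BF_sub by (auto simp: Wset_def)

lemma cc_W:
  assumes n: "1 \<le> n" and x: "x \<in> Wset n \<omega>"
  shows "connected_component_set (- (Kset \<omega> \<union> BF n)) x = connected_component_set (Wset n \<omega>) x"
proof
  show "connected_component_set (Wset n \<omega>) x \<subseteq> connected_component_set (- (Kset \<omega> \<union> BF n)) x"
    by (rule connected_component_mono[OF Wset_sub])
  define IB :: "(real^'a) set" where "IB = box (\<chi> j. - of_int n) (\<chi> j. of_int n)"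
  have sub: "- (Kset \<omega> \<union> BF n) \<subseteq> Wset n \<omega> \<union> IB"
  proof
    fix y assume y: "y \<in> - (Kset \<omega> \<union> BF n)"
    show "y \<in> Wset n \<omega> \<union> IB"
    proof (cases "y \<in> Bx n")
      case False then show ?thesis using y by (auto simp: Wset_def)
    next
      case True
      have "y$j \<notin> \<int>" for j using int_coord_in_BF[OF n True] y by blast
      then have "y$j \<noteq> of_int n" "y$j \<noteq> - of_int n" for j by (metis Ints_of_int Ints_minus)+
      then have "y \<in> IB" using Bx_nth[OF True] unfolding IB_def mem_box_cart
        by (metis order_less_le vec_lambda_beta)
      then show ?thesis by simp
    qed
  qed
  have dis: "Wset n \<omega> \<inter> IB = {}"
  proof -
    have "IB \<subseteq> Bx n" unfolding IB_def Bx_cbox using box_subset_cbox by blast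
    then show ?thesis by (auto simp: Wset_def)
  qed
  have xS: "x \<in> - (Kset \<omega> \<union> BF n)" using Wset_sub x by blast
  have "connected_component_set (- (Kset \<omega> \<union> BF n)) x \<subseteq> Wset n \<omega>"
  proof (rule conn_split[where B=IB and x=x])
    show "connected (connected_component_set (- (Kset \<omega> \<union> BF n)) x)" by simp
    show "connected_component_set (- (Kset \<omega> \<union> BF n)) x \<subseteq> Wset n \<omega> \<union> IB"
      using sub connected_component_subset[of "- (Kset \<omega> \<union> BF n)" x] by blast
    show "open (Wset n \<omega>)" by (rule open_Wset)
    show "open IB" by (simp add: IB_def open_box)
    show "Wset n \<omega> \<inter> IB = {}" by (rule dis)
    show "x \<in> connected_component_set (- (Kset \<omega> \<union> BF n)) x" by (rule mem_ccs[OF xS])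
    show "x \<in> Wset n \<omega>" by (rule x)
  qed
  then show "connected_component_set (- (Kset \<omega> \<union> BF n)) x \<subseteq> connected_component_set (Wset n \<omega>) x"
    using connected_component_maximal[OF mem_ccs[OF xS] connected_connected_component] by blast
qed

lemma cc_cases:
  assumes n: "1 \<le> n" and x: "x \<notin> Kset \<omega> \<union> BF n"
  shows "x \<in> Wset n \<omega> \<or> (\<exists>c. boxc n c \<and> x \<in> cube c)"
proof (cases "x \<in> Bx n")
  case False then show ?thesis using x by (auto simp: Wset_def)
next
  case True
  have "\<forall>j. x$j \<notin> \<int>" using int_coord_in_BF[OF n True] x by blast
  then show ?thesis using nonint_cube[OF True] by blast
qed



lemma Ints_01: "(k::real) \<in> \<int> \<Longrightarrow> 0 < k \<Longrightarrow> k < 1 \<Longrightarrow> False"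
proof -
  assume "k \<in> \<int>" "0 < k" "k < 1"
  then obtain m where m: "k = of_int m" by (auto elim: Ints_cases)
  then have "0 < m" "m < 1" using \<open>0 < k\<close> \<open>k < 1\<close> by simp_all
  then show False by simp
qed

lemma nonint_between: "a < (b::real) \<Longrightarrow> \<exists>t. a < t \<and> t < b \<and> t \<notin> \<int>"
proof -
  assume ab: "a < b"
  define d where "d = min (b - a) 1"
  have d: "0 < d" "d \<le> 1" "d \<le> b - a" using ab by (auto simp: d_def)
  show ?thesis
  proof (cases "a + d/2 \<in> \<int> \<and> a + d/4 \<in> \<int>")
    case True
    then have "(a + d/2) - (a + d/4) \<in> \<int>" by (intro Ints_diff) auto
    moreover have "(a + d/2) - (a + d/4) = d/4" by simp
    ultimately have "d/4 \<in> \<int>" by simp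
    with Ints_01[of "d/4"] d show ?thesis by simp
  next
    case False
    then consider "a + d/2 \<notin> \<int>" | "a + d/4 \<notin> \<int>" by blast
    then show ?thesis
    proof cases
      case 1
      have "a < a + d/2" "a + d/2 < b" using d by linarith+
      then show ?thesis using 1 by blast
    next
      case 2
      have "a < a + d/4" "a + d/4 < b" using d by linarith+
      then show ?thesis using 2 by blast
    qed
  qed
qed

lemma corner_finish:
  fixes \<omega> :: "'n::finite face \<Rightarrow> bool"
  assumes oV: "open V" and VB: "V \<inter> Bx n = {}" and Vcc: "V = connected_component_set (Wset n \<omega>) y"
    and yV: "y \<in> V"
    and y: "y \<in> cube co" and co: "\<not> boxc n co"
    and G1: "face_set G \<subseteq> closure (cube co)" and G2: "face_set G \<subseteq> closure (cube ci)"
    and GB: "face_set G \<subseteq> Bx n"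
  shows "face_set G \<subseteq> frontier V \<and> face_set G \<subseteq> frontier (cube ci)"
proof
  have "cube co \<subseteq> Wset n \<omega>" using cube_out[OF co] cube_Kset[of co \<omega>] by (auto simp: Wset_def)
  then have "cube co \<subseteq> V" unfolding Vcc by (rule connected_component_maximal[OF y connected_cube])
  then have "closure (cube co) \<subseteq> closure V" by (rule closure_mono)
  then have "face_set G \<subseteq> closure V" using G1 by blast
  moreover have "face_set G \<inter> V = {}" using GB VB by blast
  ultimately show "face_set G \<subseteq> frontier V" using oV by (auto simp: frontier_def interior_open)
  show "face_set G \<subseteq> frontier (cube ci)"
    using G2 cube_face_disj[of ci G] open_cube[of ci] by (auto simp: frontier_def interior_open)
qed



lemma segment_comp:
  assumes "w \<in> closed_segment a b" "a$l = c" "b$l = (c::real)"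
  shows "w$l = c"
proof -
  from assms(1) obtain u where u: "w = (1 - u) *\<^sub>R a + u *\<^sub>R b" unfolding in_segment by blast
  have "w$l = (1 - u) * a$l + u * b$l" unfolding u by simp
  also have "\<dots> = c" using assms(2,3) by (simp add: algebra_simps)
  finally show ?thesis .
qed

lemma abs_le_I: "b - r \<le> a \<Longrightarrow> a \<le> b + r \<Longrightarrow> \<bar>a - b\<bar> \<le> (r::real)"
  by (simp add: abs_diff_le_iff)

lemma corner:
  fixes \<omega> :: "'n::finite face \<Rightarrow> bool"
  assumes n: "1 \<le> n"
    and x0: "x0 \<notin> Kset \<omega>" and UB: "connected_component_set (- Kset \<omega>) x0 \<inter> Bx n \<noteq> {}"
    and z0: "z0 \<in> Wset n \<omega>"
    and VU: "connected_component_set (Wset n \<omega>) z0 \<subseteq> connected_component_set (- Kset \<omega>) x0"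
  shows "\<exists>c G. boxc n c \<and> face_set G \<subseteq> frontier (connected_component_set (Wset n \<omega>) z0)
                \<and> face_set G \<subseteq> frontier (cube c)"
proof -
  define U where "U = connected_component_set (- Kset \<omega>) x0"
  define V where "V = connected_component_set (Wset n \<omega>) z0"
  have oV: "open V" unfolding V_def by (rule open_connected_component[OF open_Wset])
  have VW: "V \<subseteq> Wset n \<omega>" unfolding V_def by (rule connected_component_subset)
  have VB: "V \<inter> Bx n = {}" using VW by (auto simp: Wset_def)
  have UK: "U \<subseteq> - Kset \<omega>" unfolding U_def by (rule connected_component_subset)
  have z0V: "z0 \<in> V" unfolding V_def by (rule mem_ccs[OF z0])
  have VU': "V \<subseteq> U" using VU by (simp add: U_def V_def)
  have "\<exists>x. x \<in> U \<and> x \<in> closure V \<and> x \<in> Bx n"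
  proof (rule ccontr)
    assume nx: "\<not> (\<exists>x. x \<in> U \<and> x \<in> closure V \<and> x \<in> Bx n)"
    obtain T where T: "closed T" "V = Wset n \<omega> \<inter> T"
      using closedin_connected_component[of "Wset n \<omega>" z0] unfolding closedin_closed V_def by blast
    have clT: "closure V \<subseteq> T" using T by (simp add: closure_minimal)
    have cl: "U \<inter> closure V \<subseteq> V"
    proof
      fix y assume y: "y \<in> U \<inter> closure V"
      then have "y \<notin> Bx n" using nx by blast
      moreover have "y \<notin> Kset \<omega>" using y UK by blast
      ultimately have "y \<in> Wset n \<omega>" by (simp add: Wset_def)
      moreover have "y \<in> T" using y clT by blast
      ultimately show "y \<in> V" using T(2) by blast
    qed
    have "closedin (top_of_set U) V"
      unfolding closedin_closed
      using cl VU' closure_subset[of V] by (intro exI[of _ "closure V"]) auto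
    moreover have "openin (top_of_set U) V"
      unfolding openin_open using oV VU' by (intro exI[of _ V]) auto
    moreover have "connected U" unfolding U_def by simp
    ultimately have "V = {} \<or> V = U" unfolding connected_clopen by blast
    then show False using z0V UB VB unfolding U_def[symmetric] by blast
  qed
  then obtain x where x: "x \<in> U" "x \<in> closure V" "x \<in> Bx n" by blast
  have "x \<in> - Kset \<omega>" using x UK by blast
  then obtain \<rho> where \<rho>: "\<rho> > 0" "ball x \<rho> \<subseteq> - Kset \<omega>"
    using open_contains_ball[THEN iffD1, OF open_compl_Kset] by blast
  define d where "d = real CARD('n)"
  have d1: "1 \<le> d" unfolding d_def by simp
  define r where "r = min \<rho> (1/2)"
  have r: "0 < r" "r \<le> 1/2" "r \<le> \<rho>" using \<rho> by (auto simp: r_def)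
  define \<eta> where "\<eta> = r / (2 * d)"
  have \<eta>: "0 < \<eta>" "\<eta> \<le> 1/4" "d * \<eta> = r / 2" using r d1
    by (auto simp: \<eta>_def field_simps)
  have "\<forall>e>0. \<exists>y\<in>V. dist y x < e" using x(2) by (simp add: closure_approachable)
  then obtain z where z: "z \<in> V" "dist z x < \<eta>" using \<eta>(1) by blast
  have zW: "z \<in> Wset n \<omega>" using z VW by blast
  then have "z \<notin> Bx n" by (simp add: Wset_def)
  then obtain l where l: "\<not> (- of_int n \<le> z$l \<and> z$l \<le> of_int n)" using Bx_I by blast
  have xl: "- of_int n \<le> x$l \<and> x$l \<le> of_int n" by (rule Bx_nth[OF x(3)])
  have zxl: "x$l - \<eta> < z$l \<and> z$l < x$l + \<eta>" using abs_lt_D[OF dist_comp_lt[OF z(2)]] by simp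
  define pos where "pos = (z$l > of_int n)"
  have zpos: "pos \<Longrightarrow> of_int n < z$l \<and> z$l < of_int n + 1" using zxl xl \<eta> by (auto simp: pos_def)
  have zneg: "\<not> pos \<Longrightarrow> - of_int n - 1 < z$l \<and> z$l < - of_int n" using zxl xl \<eta> l by (auto simp: pos_def)
  have "\<forall>j. \<exists>t. max (x$j - \<eta>) (- of_int n) < t \<and> t < min (x$j + \<eta>) (of_int n) \<and> t \<notin> \<int>"
  proof
    fix j
    have xj: "- of_int n \<le> x$j \<and> x$j \<le> of_int n" by (rule Bx_nth[OF x(3)])
    have "max (x$j - \<eta>) (- of_int n) < min (x$j + \<eta>) (of_int n)" using xj \<eta>(1) n by auto
    then show "\<exists>t. max (x$j - \<eta>) (- of_int n) < t \<and> t < min (x$j + \<eta>) (of_int n) \<and> t \<notin> \<int>"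
      by (rule nonint_between)
  qed
  then obtain t where t: "\<And>j. max (x$j - \<eta>) (- of_int n) < t j \<and> t j < min (x$j + \<eta>) (of_int n) \<and> t j \<notin> \<int>"
    by metis
  define y :: "real^'n" where "y = (\<chi> j. if j = l then z$l else t j)"
  have yl: "y$l = z$l" by (simp add: y_def)
  have yo: "j \<noteq> l \<Longrightarrow> y$j = t j" for j by (simp add: y_def)
  have yxj: "\<bar>(y - x)$j\<bar> \<le> \<eta>" for j
  proof (cases "j = l")
    case True show ?thesis unfolding True vector_minus_component yl
      by (rule abs_le_I) (use zxl in linarith)+
  next
    case False show ?thesis unfolding vector_minus_component yo[OF False]
      by (rule abs_le_I) (use t[of j] in auto)
  qed
  have "norm (y - x) \<le> (\<Sum>j\<in>UNIV. \<bar>(y - x)$j\<bar>)" by (rule norm_le_l1_cart)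
  also have "\<dots> \<le> (\<Sum>j\<in>(UNIV::'n set). \<eta>)" by (rule sum_mono) (rule yxj)
  also have "\<dots> = d * \<eta>" by (simp add: d_def)
  finally have "norm (y - x) < r" using \<eta> r by linarith
  then have yb: "y \<in> ball x r" by (simp add: dist_norm norm_minus_commute)
  have zb: "z \<in> ball x r" using z(2) \<eta> r d1
  proof -
    have "\<eta> \<le> r / 2" using \<eta> d1 r by (simp add: \<eta>_def field_simps)
    then show ?thesis using z(2) r by (simp add: dist_commute)
  qed
  have segK: "closed_segment z y \<subseteq> - Kset \<omega>"
  proof -
    have "closed_segment z y \<subseteq> ball x r" by (rule closed_segment_subset[OF zb yb convex_ball])
    also have "\<dots> \<subseteq> ball x \<rho>" using r by auto
    finally show ?thesis using \<rho> by blast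
  qed
  have segB: "closed_segment z y \<inter> Bx n = {}"
  proof -
    { fix w assume w: "w \<in> closed_segment z y" "w \<in> Bx n"
      have "w$l = z$l" by (rule segment_comp[OF w(1) refl yl])
      with Bx_nth[OF w(2), of l] l have False by simp }
    then show ?thesis by blast
  qed
  have "closed_segment z y \<subseteq> Wset n \<omega>" using segK segB by (auto simp: Wset_def)
  then have "closed_segment z y \<subseteq> connected_component_set (Wset n \<omega>) z"
    by (rule connected_component_maximal[OF ends_in_segment(1) connected_segment])
  moreover have "connected_component_set (Wset n \<omega>) z = V"
    unfolding V_def using z(1) V_def connected_component_eq by blast
  ultimately have yV: "y \<in> V" using ends_in_segment(2) by blast
  have Vy: "V = connected_component_set (Wset n \<omega>) y"
    unfolding V_def using yV V_def connected_component_eq by blast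
  define v :: "int^'n" where "v = (\<chi> j. if j = l then (if pos then n else - n) else \<lfloor>t j\<rfloor>)"
  have vo: "j \<noteq> l \<Longrightarrow> - n \<le> v$j \<and> v$j \<le> n - 1" for j
  proof -
    assume jl: "j \<noteq> l"
    have "- of_int n < t j" "t j < of_int n" using t[of j] by auto
    then have "- n \<le> \<lfloor>t j\<rfloor>" "\<lfloor>t j\<rfloor> < n" by (simp_all add: le_floor_iff floor_less_iff)
    then show ?thesis using jl by (simp add: v_def)
  qed
  have vyo: "j \<noteq> l \<Longrightarrow> of_int (v$j) < y$j \<and> y$j < of_int (v$j) + 1" for j
  proof -
    assume jl: "j \<noteq> l"
    have ni: "t j \<notin> \<int>" using t[of j] by blast
    have "of_int \<lfloor>t j\<rfloor> \<noteq> t j" using ni by (metis Ints_of_int)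
    then have "of_int \<lfloor>t j\<rfloor> < t j" using of_int_floor_le[of "t j"] by linarith
    then show ?thesis using jl yo[OF jl] by (simp add: v_def real_of_int_floor_add_one_gt)
  qed
  have inBv: "inB n (v, l)" unfolding inB_def
  proof (intro allI)
    fix j show "- n \<le> fst (v, l) $ j \<and> fst (v, l) $ j \<le> (if j = snd (v, l) then n else n - 1)"
    proof (cases "j = l")
      case True then show ?thesis using n by (simp add: v_def)
    next
      case False then show ?thesis using vo[OF False] by simp
    qed
  qed
  have GB: "face_set (v,l) \<subseteq> Bx n" using inBv BF_sub unfolding BF_def by blast
  show ?thesis
  proof (cases pos)
    case True
    have yc: "y \<in> cube v" unfolding cube_def
    proof (intro CollectI allI)
      fix j show "of_int (v$j) < y$j \<and> y$j < of_int (v$j) + 1"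
      proof (cases "j = l")
        case True then show ?thesis using zpos[OF \<open>pos\<close>] yl \<open>pos\<close> by (simp add: v_def)
      qed (rule vyo)
    qed
    have co: "\<not> boxc n v" unfolding boxc_def using True by (auto simp: v_def intro!: exI[of _ l])
    have ci: "boxc n (v - ev l)" unfolding boxc_def
    proof (intro allI)
      fix j show "- n \<le> (v - ev l) $ j \<and> (v - ev l) $ j \<le> n - 1"
      proof (cases "j = l")
        case True then show ?thesis using n \<open>pos\<close> by (simp add: v_def ev_nth)
      next
        case False then show ?thesis using vo[OF False] by (simp add: ev_nth)
      qed
    qed
    have "face_set (v,l) \<subseteq> frontier V \<and> face_set (v,l) \<subseteq> frontier (cube (v - ev l))"
      by (rule corner_finish[OF oV VB Vy yV yc co face_closure_cube1 face_closure_cube2 GB])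
    then show ?thesis using ci unfolding V_def by blast
  next
    case False
    have yc: "y \<in> cube (v - ev l)" unfolding cube_def
    proof (intro CollectI allI)
      fix j show "of_int ((v - ev l)$j) < y$j \<and> y$j < of_int ((v - ev l)$j) + 1"
      proof (cases "j = l")
        case True then show ?thesis using zneg[OF \<open>\<not> pos\<close>] yl \<open>\<not> pos\<close> by (simp add: v_def ev_nth)
      next
        case False then show ?thesis using vyo[OF False] by (simp add: ev_nth)
      qed
    qed
    have co: "\<not> boxc n (v - ev l)" unfolding boxc_def using False by (auto simp: v_def ev_nth intro!: exI[of _ l])
    have ci: "boxc n v" unfolding boxc_def
    proof (intro allI)
      fix j show "- n \<le> v $ j \<and> v $ j \<le> n - 1"
      proof (cases "j = l")
        case True then show ?thesis using n \<open>\<not> pos\<close> by (simp add: v_def)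
      next
        case False then show ?thesis using vo[OF False] by simp
      qed
    qed
    have "face_set (v,l) \<subseteq> frontier V \<and> face_set (v,l) \<subseteq> frontier (cube v)"
      by (rule corner_finish[OF oV VB Vy yV yc co face_closure_cube2 face_closure_cube1 GB])
    then show ?thesis using ci unfolding V_def by blast
  qed
qed



lemma holesE:
  assumes "H \<in> holes \<omega>"
  obtains x where "x \<notin> Kset \<omega>" "H = connected_component_set (- Kset \<omega>) x" "bounded H"
  using assms unfolding holes_def by blast

lemma holesI:
  "x \<notin> Kset \<omega> \<Longrightarrow> H = connected_component_set (- Kset \<omega>) x \<Longrightarrow> bounded H \<Longrightarrow> H \<in> holes \<omega>"
  unfolding holes_def by blast

lemma edgesI:
  "H1 \<in> holes \<omega> \<Longrightarrow> H2 \<in> holes \<omega> \<Longrightarrow> H1 \<noteq> H2 \<Longrightarrow> face_set F \<subseteq> frontier H1 \<Longrightarrow>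
   face_set F \<subseteq> frontier H2 \<Longrightarrow> (H1, H2) \<in> hole_edges \<omega>"
  unfolding hole_edges_def by blast

lemma edgesD:
  "(H1, H2) \<in> hole_edges \<omega> \<Longrightarrow> H1 \<in> holes \<omega> \<and> H2 \<in> holes \<omega> \<and> H1 \<noteq> H2 \<and>
   (\<exists>F. face_set F \<subseteq> frontier H1 \<and> face_set F \<subseteq> frontier H2)"
  unfolding hole_edges_def by blast

lemma sym_edges: "sym (hole_edges \<omega>)"
  unfolding sym_def hole_edges_def by blast

lemma rtrancl_sym_Image:
  assumes "sym E" "(a, b) \<in> E\<^sup>*" shows "E\<^sup>* `` {a} = E\<^sup>* `` {b}"
proof -
  have s: "sym (E\<^sup>*)" using assms(1) by (rule sym_rtrancl)
  have "(b, a) \<in> E\<^sup>*" using assms(2) s by (meson symD)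
  show ?thesis using assms(2) \<open>(b, a) \<in> E\<^sup>*\<close> by (auto intro: rtrancl_trans)
qed

lemma reach_holes:
  assumes "H \<in> holes \<omega>" "(H, X) \<in> (hole_edges \<omega>)\<^sup>*" shows "X \<in> holes \<omega>"
  using assms(2,1) by (induction rule: rtrancl_induct) (auto dest: edgesD)

lemma componentsE:
  assumes "C \<in> hole_components \<omega>"
  obtains H where "H \<in> holes \<omega>" "C = (hole_edges \<omega>)\<^sup>* `` {H}"
  using assms unfolding hole_components_def quotient_def by blast

lemma components_sub: "C \<in> hole_components \<omega> \<Longrightarrow> C \<subseteq> holes \<omega>"
  by (auto elim!: componentsE intro: reach_holes)

lemma hole_open: "H \<in> holes \<omega> \<Longrightarrow> open H"
  by (auto elim!: holesE intro: open_connected_component open_compl_Kset)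

lemma hole_nonempty: "H \<in> holes \<omega> \<Longrightarrow> H \<noteq> {}"
proof -
  assume "H \<in> holes \<omega>"
  then obtain x where "x \<notin> Kset \<omega>" "H = connected_component_set (- Kset \<omega>) x" by (rule holesE)
  then have "x \<in> H" using mem_ccs[of x "- Kset \<omega>"] by blast
  then show ?thesis by blast
qed

lemma cube_center: "(\<chi> j. of_int (c$j) + 1/2) \<in> cube c"
  by (simp add: cube_def)

lemma boxcube_hole:
  assumes "boxc n c" shows "cube c \<in> holes (Tn n \<omega>)"
proof (rule holesI)
  let ?x = "(\<chi> j. of_int (c$j) + 1/2) :: real^'a"
  show "?x \<notin> Kset (Tn n \<omega>)" using cube_sub_compl[of c \<omega> n] cube_center[of c] by (auto simp: Kset_Tn)
  show "cube c = connected_component_set (- Kset (Tn n \<omega>)) ?x"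
    unfolding Kset_Tn using cc_box[OF assms cube_center] by simp
  show "bounded (cube c)" by (rule bounded_cube)
qed

lemma Tn_hole_cases:
  assumes n: "1 \<le> n" and H: "H \<in> holes (Tn n \<omega>)"
  shows "(\<exists>c. boxc n c \<and> H = cube c) \<or> (\<exists>z. z \<in> Wset n \<omega> \<and> H = connected_component_set (Wset n \<omega>) z)"
proof -
  obtain x where x: "x \<notin> Kset \<omega> \<union> BF n" "H = connected_component_set (- (Kset \<omega> \<union> BF n)) x"
    using H by (auto elim!: holesE simp: Kset_Tn)
  from cc_cases[OF n x(1)] show ?thesis
  proof
    assume "x \<in> Wset n \<omega>" then show ?thesis using cc_W[OF n] x by blast
  next
    assume "\<exists>c. boxc n c \<and> x \<in> cube c"
    then show ?thesis using cc_box x by blast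
  qed
qed

lemma old_is_W:
  assumes h: "h = connected_component_set (- Kset \<omega>) x" "x \<notin> Kset \<omega>" and hB: "h \<inter> Bx n = {}"
  shows "h = connected_component_set (Wset n \<omega>) x" "x \<in> Wset n \<omega>"
proof -
  have hK: "h \<subseteq> - Kset \<omega>" unfolding h by (rule connected_component_subset)
  have hW: "h \<subseteq> Wset n \<omega>" using hK hB by (auto simp: Wset_def)
  have xh: "x \<in> h" unfolding h using mem_ccs h(2) by blast
  show xW: "x \<in> Wset n \<omega>" using xh hW by blast
  show "h = connected_component_set (Wset n \<omega>) x"
  proof
    show "h \<subseteq> connected_component_set (Wset n \<omega>) x"
      by (rule connected_component_maximal[OF xh _ hW]) (simp add: h)
    have "Wset n \<omega> \<subseteq> - Kset \<omega>" by (auto simp: Wset_def)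
    then show "connected_component_set (Wset n \<omega>) x \<subseteq> h"
      unfolding h by (rule connected_component_mono)
  qed
qed

lemma old_hole_Tn:
  assumes n: "1 \<le> n" and h: "h \<in> holes \<omega>" and hB: "h \<inter> Bx n = {}"
  shows "h \<in> holes (Tn n \<omega>)"
proof -
  obtain x where x: "x \<notin> Kset \<omega>" "h = connected_component_set (- Kset \<omega>) x" "bounded h"
    using h by (rule holesE)
  have 1: "h = connected_component_set (Wset n \<omega>) x" "x \<in> Wset n \<omega>" using old_is_W[OF x(2,1) hB] by auto
  show ?thesis
  proof (rule holesI)
    show "x \<notin> Kset (Tn n \<omega>)" using 1(2) Wset_sub by (auto simp: Kset_Tn)
    show "h = connected_component_set (- Kset (Tn n \<omega>)) x" unfolding Kset_Tn using cc_W[OF n 1(2)] 1(1) by simp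
  qed (rule x(3))
qed

lemma cc_disj_or_eq:
  "connected_component_set S a \<inter> connected_component_set S b \<noteq> {} \<Longrightarrow>
   connected_component_set S a = connected_component_set S b"
  by (metis connected_component_eq disjoint_iff)



lemma boxcube_sub_Bx: "boxc n c \<Longrightarrow> cube c \<subseteq> Bx n"
  using boxc_closure_sub closure_subset by blast

lemma frontier_open_sub: "open H \<Longrightarrow> S \<subseteq> closure H \<Longrightarrow> S \<inter> H = {} \<Longrightarrow> S \<subseteq> frontier H"
  by (auto simp: frontier_def interior_open)

lemma frontier_open_D: "open H \<Longrightarrow> S \<subseteq> frontier H \<Longrightarrow> S \<subseteq> closure H \<and> S \<inter> H = {}"
  by (auto simp: frontier_def interior_open)

lemma DL_core:
  fixes \<omega> :: "'n::finite face \<Rightarrow> bool"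
  assumes n: "1 \<le> n"
    and infm: "\<And>C. C \<in> hole_components \<omega> \<Longrightarrow> infinite C \<Longrightarrow> \<exists>h\<in>C. h \<inter> Bx n \<noteq> {}"
    and D: "D \<in> hole_components (Tn n \<omega>)" and Dinf: "infinite D"
  shows "\<exists>c. boxc n c \<and> cube c \<in> D"
proof (rule ccontr)
  assume nobox: "\<not> (\<exists>c. boxc n c \<and> cube c \<in> D)"
  let ?E' = "hole_edges (Tn n \<omega>)"
  let ?E = "hole_edges \<omega>"
  obtain H0 where H0: "H0 \<in> holes (Tn n \<omega>)" "D = ?E'\<^sup>* `` {H0}" using D by (rule componentsE)
  have Dh: "X \<in> D \<Longrightarrow> X \<in> holes (Tn n \<omega>)" for X using H0 reach_holes by blast
  have Dstep: "X \<in> D \<Longrightarrow> (X, Y) \<in> ?E' \<Longrightarrow> Y \<in> D" for X Y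
    using H0(2) by (auto intro: rtrancl_into_rtrancl)
  have A: "\<exists>z. z \<notin> Kset \<omega> \<and> X = connected_component_set (- Kset \<omega>) z \<and> X \<inter> Bx n = {} \<and> X \<in> holes \<omega>"
    if XD: "X \<in> D" for X
  proof -
    have Xh: "X \<in> holes (Tn n \<omega>)" using Dh[OF XD] .
    from Tn_hole_cases[OF n Xh] obtain z where z: "z \<in> Wset n \<omega>" "X = connected_component_set (Wset n \<omega>) z"
      using nobox XD by blast
    have zK: "z \<notin> Kset \<omega>" using z(1) by (simp add: Wset_def)
    define U where "U = connected_component_set (- Kset \<omega>) z"
    have XU: "X \<subseteq> U" unfolding z(2) U_def by (rule connected_component_mono) (auto simp: Wset_def)
    have XB: "X \<inter> Bx n = {}" using connected_component_subset[of "Wset n \<omega>" z] z(2) by (auto simp: Wset_def)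
    have UB: "U \<inter> Bx n = {}"
    proof (rule ccontr)
      assume "U \<inter> Bx n \<noteq> {}"
      from corner[OF n zK this[unfolded U_def] z(1) XU[unfolded z(2) U_def]]
      obtain c G where cG: "boxc n c" "face_set G \<subseteq> frontier X" "face_set G \<subseteq> frontier (cube c)"
        using z(2) by blast
      have "X \<noteq> cube c" using XB boxcube_sub_Bx[OF cG(1)] cube_nonempty[of c] by blast
      then have "(X, cube c) \<in> ?E'" using Xh boxcube_hole[OF cG(1)] cG(2,3) by (intro edgesI) auto
      then have "cube c \<in> D" using Dstep[OF XD] by blast
      then show False using nobox cG(1) by blast
    qed
    have "U = connected_component_set (Wset n \<omega>) z" using old_is_W[OF U_def zK UB] by blast
    then have XU2: "X = U" using z(2) by simp
    have "bounded X" using Xh by (auto elim!: holesE)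
    then have "X \<in> holes \<omega>" using XU2 zK U_def by (auto intro: holesI)
    then show ?thesis using XU2 zK U_def XB by blast
  qed
  have B: "Y \<in> D" if XD: "X \<in> D" and XY: "(X, Y) \<in> ?E" for X Y
  proof -
    obtain zx where zx: "zx \<notin> Kset \<omega>" "X = connected_component_set (- Kset \<omega>) zx" "X \<inter> Bx n = {}" "X \<in> holes \<omega>"
      using A[OF XD] by blast
    have Yh: "Y \<in> holes \<omega>" and XY': "X \<noteq> Y" and F: "\<exists>F. face_set F \<subseteq> frontier X \<and> face_set F \<subseteq> frontier Y"
      using edgesD[OF XY] by auto
    obtain F where F: "face_set F \<subseteq> frontier X" "face_set F \<subseteq> frontier Y" using F by blast
    show "Y \<in> D"
    proof (cases "Y \<inter> Bx n = {}")
      case True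
      have "(X, Y) \<in> ?E'" using Dh[OF XD] old_hole_Tn[OF n Yh True] XY' F by (intro edgesI) auto
      then show ?thesis using Dstep[OF XD] by blast
    next
      case False
      obtain zy where zy: "zy \<notin> Kset \<omega>" "Y = connected_component_set (- Kset \<omega>) zy" using Yh by (rule holesE)
      have oY: "open Y" using hole_open[OF Yh] .
      obtain v i where Fv: "F = (v, i)" by fastforce
      have FY: "face_set (v,i) \<subseteq> closure Y" "Y \<inter> face_set (v,i) = {}"
        using frontier_open_D[OF oY F(2)] Fv by auto
      have "\<exists>q. Y \<inter> cube q \<noteq> {} \<and> face_set F \<subseteq> closure (cube q)"
        using cube_side[OF oY FY] face_closure_cube1[of v i] face_closure_cube2[of v i] Fv by blast
      then obtain q where q: "Y \<inter> cube q \<noteq> {}" "face_set F \<subseteq> closure (cube q)" by blast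
      obtain y where y: "y \<in> Y" "y \<in> cube q" using q(1) by blast
      have Yy: "Y = connected_component_set (- Kset \<omega>) y" using zy(2) y(1) connected_component_eq by blast
      have qY: "cube q \<subseteq> Y" unfolding Yy
        by (rule connected_component_maximal[OF y(2) connected_cube]) (use cube_Kset in blast)
      have FX: "face_set F \<subseteq> frontier X" by (rule F(1))
      have Xh': "X \<in> holes (Tn n \<omega>)" using Dh[OF XD] .
      show ?thesis
      proof (cases "boxc n q")
        case True
        have "X \<noteq> cube q" using zx(3) boxcube_sub_Bx[OF True] cube_nonempty[of q] by blast
        moreover have "face_set F \<subseteq> frontier (cube q)"
          by (rule frontier_open_sub[OF open_cube q(2)]) (use cube_face_disj[of q F] in blast)
        ultimately have "(X, cube q) \<in> ?E'" using Xh' boxcube_hole[OF True] FX by (intro edgesI) auto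
        then have "cube q \<in> D" using Dstep[OF XD] by blast
        then show ?thesis using nobox True by blast
      next
        case nb: False
        have yW: "y \<in> Wset n \<omega>" using y(2) cube_out[OF nb] cube_Kset[of q \<omega>] by (auto simp: Wset_def)
        define V' where "V' = connected_component_set (Wset n \<omega>) y"
        have V'Y: "V' \<subseteq> Y" unfolding V'_def Yy by (rule connected_component_mono) (auto simp: Wset_def)
        have qV': "cube q \<subseteq> V'" unfolding V'_def
          by (rule connected_component_maximal[OF y(2) connected_cube])
             (use cube_out[OF nb] cube_Kset[of q \<omega>] in \<open>auto simp: Wset_def\<close>)
        have oV': "open V'" unfolding V'_def by (rule open_connected_component[OF open_Wset])
        have V'h: "V' \<in> holes (Tn n \<omega>)"
        proof (rule holesI)
          show "y \<notin> Kset (Tn n \<omega>)" using yW Wset_sub by (auto simp: Kset_Tn)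
          show "V' = connected_component_set (- Kset (Tn n \<omega>)) y" unfolding Kset_Tn V'_def using cc_W[OF n yW] by simp
          show "bounded V'" using V'Y Yh by (auto elim!: holesE intro: bounded_subset)
        qed
        have "face_set F \<subseteq> frontier V'"
        proof (rule frontier_open_sub[OF oV'])
          show "face_set F \<subseteq> closure V'" using q(2) closure_mono[OF qV'] by blast
          show "face_set F \<inter> V' = {}" using FY V'Y Fv by blast
        qed
        moreover have "X \<noteq> V'"
        proof
          assume "X = V'"
          then have "y \<in> X" using qV' y(2) by blast
          then have "X = Y" using zx(2) Yy connected_component_eq by blast
          then show False using XY' by blast
        qed
        ultimately have "(X, V') \<in> ?E'" using Xh' V'h FX by (intro edgesI) auto
        then have "V' \<in> D" using Dstep[OF XD] by blast
        then obtain w where w: "V' = connected_component_set (- Kset \<omega>) w" "V' \<inter> Bx n = {}"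
          using A by blast
        have "y \<in> V'" using qV' y(2) by blast
        then have "V' = Y" using w(1) Yy connected_component_eq by blast
        then show ?thesis using w(2) False by blast
      qed
    qed
  qed
  have H0D: "H0 \<in> D" using H0(2) by blast
  have H0h: "H0 \<in> holes \<omega>" using A[OF H0D] by blast
  have "D = ?E\<^sup>* `` {H0}"
  proof
    show "D \<subseteq> ?E\<^sup>* `` {H0}"
    proof
      fix X assume "X \<in> D"
      then have "(H0, X) \<in> ?E'\<^sup>*" using H0(2) by blast
      then show "X \<in> ?E\<^sup>* `` {H0}"
      proof (induction rule: rtrancl_induct)
        case base then show ?case by simp
      next
        case (step Y Z)
        have YD: "Y \<in> D" using step.hyps(1) H0(2) by blast
        have ZD: "Z \<in> D" using Dstep[OF YD step.hyps(2)] .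
        have ne: "Y \<noteq> Z" and "\<exists>F. face_set F \<subseteq> frontier Y \<and> face_set F \<subseteq> frontier Z"
          using edgesD[OF step.hyps(2)] by auto
        then obtain F where F: "face_set F \<subseteq> frontier Y" "face_set F \<subseteq> frontier Z" by blast
        have Yh: "Y \<in> holes \<omega>" using A[OF YD] by blast
        have Zh: "Z \<in> holes \<omega>" using A[OF ZD] by blast
        have "(Y, Z) \<in> ?E" by (rule edgesI[OF Yh Zh ne F(1) F(2)])
        then show ?case using step.IH by (auto intro: rtrancl_into_rtrancl)
      qed
    qed
    show "?E\<^sup>* `` {H0} \<subseteq> D"
    proof
      fix X assume "X \<in> ?E\<^sup>* `` {H0}"
      then have "(H0, X) \<in> ?E\<^sup>*" by blast
      then show "X \<in> D"
      proof (induction rule: rtrancl_induct)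
        case base then show ?case by (rule H0D)
      next
        case (step Y Z) then show ?case using B by blast
      qed
    qed
  qed
  then have "D \<in> hole_components \<omega>" using H0h unfolding hole_components_def quotient_def by blast
  from infm[OF this Dinf] obtain h where "h \<in> D" "h \<inter> Bx n \<noteq> {}" by blast
  then show False using A by blast
qed



lemma ev_neq: "c \<noteq> c + ev j"
proof
  assume "c = c + ev j"
  then have "c$j = (c + ev j)$j" by simp
  then show False by (simp add: ev_nth)
qed

lemma cube_inj: "c \<noteq> c' \<Longrightarrow> cube c \<noteq> cube c'"
  using cube_disj[of c c'] cube_nonempty[of c] by auto

lemma box_adj:
  assumes "boxc n c" "boxc n (c + ev j)"
  shows "(cube c, cube (c + ev j)) \<in> hole_edges (Tn n \<omega>)"
proof (rule edgesI[where F="(c + ev j, j)"])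
  show "cube c \<in> holes (Tn n \<omega>)" by (rule boxcube_hole[OF assms(1)])
  show "cube (c + ev j) \<in> holes (Tn n \<omega>)" by (rule boxcube_hole[OF assms(2)])
  show "cube c \<noteq> cube (c + ev j)" by (rule cube_inj[OF ev_neq])
  have "face_set (c + ev j, j) \<subseteq> closure (cube (c + ev j - ev j))" by (rule face_closure_cube2)
  then have "face_set (c + ev j, j) \<subseteq> closure (cube c)" by simp
  then show "face_set (c + ev j, j) \<subseteq> frontier (cube c)"
    by (rule frontier_open_sub[OF open_cube]) (use cube_face_disj[of c] in blast)
  show "face_set (c + ev j, j) \<subseteq> frontier (cube (c + ev j))"
    by (rule frontier_open_sub[OF open_cube face_closure_cube1]) (use cube_face_disj[of "c + ev j"] in blast)
qed

lemma box_conn_aux: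
  "\<forall>c. boxc n c \<longrightarrow> boxc n c' \<longrightarrow> (\<Sum>j\<in>UNIV. nat \<bar>c$j - c'$j\<bar>) = m \<longrightarrow>
      (cube c, cube c') \<in> (hole_edges (Tn n \<omega>))\<^sup>*"
proof (induction m rule: less_induct)
  case (less m)
  show ?case
  proof (intro allI impI)
    fix c :: "int^'a" assume c: "boxc n c" and c': "boxc n c'" and m: "(\<Sum>j\<in>UNIV. nat \<bar>c$j - c'$j\<bar>) = m"
    show "(cube c, cube c') \<in> (hole_edges (Tn n \<omega>))\<^sup>*"
    proof (cases "c = c'")
      case True then show ?thesis by simp
    next
      case False
      then obtain j where j: "c$j \<noteq> c'$j" by (metis vec_eq_iff)
      have cb: "- n \<le> c$l \<and> c$l \<le> n - 1" "- n \<le> c'$l \<and> c'$l \<le> n - 1" for l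
        using c c' unfolding boxc_def by blast+
      show ?thesis
      proof (cases "c$j < c'$j")
        case True
        define c2 where "c2 = c + ev j"
        have c2: "boxc n c2" unfolding boxc_def
        proof
          fix l show "- n \<le> c2$l \<and> c2$l \<le> n - 1"
            using cb[of l] cb[of j] True by (cases "l = j") (auto simp: c2_def ev_nth)
        qed
        have lt: "(\<Sum>l\<in>UNIV. nat \<bar>c2$l - c'$l\<bar>) < m"
          unfolding m[symmetric]
        proof (rule sum_strict_mono_ex1)
          show "\<forall>l\<in>UNIV. nat \<bar>c2$l - c'$l\<bar> \<le> nat \<bar>c$l - c'$l\<bar>"
            using True by (auto simp: c2_def ev_nth)
          show "\<exists>l\<in>UNIV. nat \<bar>c2$l - c'$l\<bar> < nat \<bar>c$l - c'$l\<bar>"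
            using True by (intro bexI[of _ j]) (auto simp: c2_def ev_nth)
        qed simp
        have "(cube c2, cube c') \<in> (hole_edges (Tn n \<omega>))\<^sup>*" using less.IH[OF lt] c2 c' by blast
        moreover have "(cube c, cube c2) \<in> hole_edges (Tn n \<omega>)"
          unfolding c2_def by (rule box_adj[OF c c2[unfolded c2_def]])
        ultimately show ?thesis by (rule converse_rtrancl_into_rtrancl[rotated])
      next
        case False
        then have lt0: "c'$j < c$j" using j by simp
        define c2 where "c2 = c - ev j"
        have c2: "boxc n c2" unfolding boxc_def
        proof
          fix l show "- n \<le> c2$l \<and> c2$l \<le> n - 1"
            using cb[of l] cb[of j] lt0 by (cases "l = j") (auto simp: c2_def ev_nth)
        qed
        have lt: "(\<Sum>l\<in>UNIV. nat \<bar>c2$l - c'$l\<bar>) < m"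
          unfolding m[symmetric]
        proof (rule sum_strict_mono_ex1)
          show "\<forall>l\<in>UNIV. nat \<bar>c2$l - c'$l\<bar> \<le> nat \<bar>c$l - c'$l\<bar>"
            using lt0 by (auto simp: c2_def ev_nth)
          show "\<exists>l\<in>UNIV. nat \<bar>c2$l - c'$l\<bar> < nat \<bar>c$l - c'$l\<bar>"
            using lt0 by (intro bexI[of _ j]) (auto simp: c2_def ev_nth)
        qed simp
        have "(cube c2, cube c') \<in> (hole_edges (Tn n \<omega>))\<^sup>*" using less.IH[OF lt] c2 c' by blast
        moreover have "(cube c2, cube c) \<in> hole_edges (Tn n \<omega>)"
        proof -
          have "c2 + ev j = c" by (simp add: c2_def)
          then show ?thesis using box_adj[OF c2, of j] c by simp
        qed
        then have "(cube c, cube c2) \<in> hole_edges (Tn n \<omega>)" using sym_edges by (meson symD)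
        ultimately show ?thesis by (rule converse_rtrancl_into_rtrancl[rotated])
      qed
    qed
  qed
qed

lemma box_conn: "boxc n c \<Longrightarrow> boxc n c' \<Longrightarrow> (cube c, cube c') \<in> (hole_edges (Tn n \<omega>))\<^sup>*"
  using box_conn_aux by blast

lemma N_Tn_le1:
  fixes \<omega> :: "'n::finite face \<Rightarrow> bool"
  assumes n: "1 \<le> n"
    and infm: "\<And>C. C \<in> hole_components \<omega> \<Longrightarrow> infinite C \<Longrightarrow> \<exists>h\<in>C. h \<inter> Bx n \<noteq> {}"
  shows "N_inf (Tn n \<omega>) \<le> 1"
proof -
  define c0 :: "int^'n" where "c0 = (\<chi> j. - n)"
  have c0: "boxc n c0" using n by (simp add: boxc_def c0_def)
  let ?E' = "hole_edges (Tn n \<omega>)"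
  define S where "S = {C \<in> hole_components (Tn n \<omega>). infinite C}"
  have sub: "S \<subseteq> {?E'\<^sup>* `` {cube c0}}"
  proof
    fix C assume "C \<in> S"
    then have C: "C \<in> hole_components (Tn n \<omega>)" "infinite C" by (auto simp: S_def)
    obtain c where c: "boxc n c" "cube c \<in> C" using DL_core[OF n infm C] by blast
    obtain H where H: "C = ?E'\<^sup>* `` {H}" using C(1) by (rule componentsE)
    have "(H, cube c) \<in> ?E'\<^sup>*" using c(2) H by blast
    moreover have "(cube c, cube c0) \<in> ?E'\<^sup>*" by (rule box_conn[OF c(1) c0])
    ultimately have "(H, cube c0) \<in> ?E'\<^sup>*" by (rule rtrancl_trans)
    then have "C = ?E'\<^sup>* `` {cube c0}" unfolding H by (rule rtrancl_sym_Image[OF sym_edges])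
    then show "C \<in> {?E'\<^sup>* `` {cube c0}}" by simp
  qed
  then have fin: "finite S" by (rule finite_subset) simp
  have "card S \<le> 1" using card_mono[OF _ sub] by simp
  then show ?thesis using fin unfolding N_inf_def S_def[symmetric] by (simp add: one_enat_def)
qed

lemma choose_n:
  fixes \<omega> :: "'n::finite face \<Rightarrow> bool"
  assumes N: "N_inf \<omega> = enat k"
  shows "\<exists>n\<ge>1. \<forall>C. C \<in> hole_components \<omega> \<longrightarrow> infinite C \<longrightarrow> (\<exists>h\<in>C. h \<inter> Bx n \<noteq> {})"
proof -
  define S where "S = {C \<in> hole_components \<omega>. infinite C}"
  have fin: "finite S" using N unfolding N_inf_def S_def[symmetric] by (auto split: if_splits)
  have "\<forall>C\<in>S. \<exists>p. \<exists>h\<in>C. p \<in> h"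
  proof
    fix C assume "C \<in> S"
    then have C: "C \<in> hole_components \<omega>" "infinite C" by (auto simp: S_def)
    then obtain h where h: "h \<in> C" by (metis finite.emptyI ex_in_conv)
    then have "h \<in> holes \<omega>" using components_sub[OF C(1)] by blast
    then obtain p where "p \<in> h" using hole_nonempty by blast
    then show "\<exists>p. \<exists>h\<in>C. p \<in> h" using h by blast
  qed
  then obtain f where f: "\<And>C. C \<in> S \<Longrightarrow> \<exists>h\<in>C. f C \<in> h" by metis
  have "bounded (f ` S)" using fin by (intro finite_imp_bounded) simp
  then obtain a where a: "\<And>p. p \<in> f ` S \<Longrightarrow> norm p \<le> a" unfolding bounded_iff by blast
  define n where "n = max 1 \<lceil>a\<rceil>"
  have "f C \<in> Bx n" if "C \<in> S" for C
  proof (rule Bx_I)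
    fix j
    have "\<bar>f C $ j\<bar> \<le> norm (f C)" by (rule component_le_norm_cart)
    also have "\<dots> \<le> a" using a that by blast
    also have "\<dots> \<le> of_int n" unfolding n_def by (metis le_of_int_ceiling max.cobounded2 of_int_le_iff order_trans)
    finally show "- of_int n \<le> f C $ j \<and> f C $ j \<le> of_int n" by (simp add: abs_le_iff)
  qed
  then have "\<forall>C. C \<in> hole_components \<omega> \<longrightarrow> infinite C \<longrightarrow> (\<exists>h\<in>C. h \<inter> Bx n \<noteq> {})"
    using f unfolding S_def by blast
  moreover have "1 \<le> n" by (simp add: n_def)
  ultimately show ?thesis by blast
qed

lemma N_allfalse: "N_inf (\<lambda>_::'n::finite face. False) = 0"
proof -
  have "Kset (\<lambda>_::'n face. False) = {}" by (simp add: Kset_def)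
  then have "holes (\<lambda>_::'n face. False) = {}"
    unfolding holes_def using not_bounded_UNIV by (auto simp: connected_component_UNIV)
  then have "hole_components (\<lambda>_::'n face. False) = {}" by (simp add: hole_components_def)
  then show ?thesis by (simp add: N_inf_def zero_enat_def)
qed

lemma AE_exists: "prob_space M \<Longrightarrow> AE x in M. P x \<Longrightarrow> \<exists>x. P x"
proof (rule ccontr)
  assume M: "prob_space M" and ae: "AE x in M. P x" and "\<not> (\<exists>x. P x)"
  then have "AE x in M. False" by (auto elim: AE_mp)
  then show False using prob_space.AE_False[OF M] by simp
qed

theorem lemma4p1:
  fixes p :: real and k :: nat
  assumes "CARD('n::finite) \<ge> 2"
    and "0 \<le> p" and "p \<le> 1"
    and "1 \<le> k"
    and "AE \<omega> in (face_perc p :: ('n face \<Rightarrow> bool) measure). N_inf \<omega> = enat k"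
  shows "k = 1"
proof (cases "p = 0")
  case True
  have "AE \<omega> in (face_perc p :: ('n face \<Rightarrow> bool) measure). \<not> \<omega> F" for F
  proof -
    have "AE x in measure_pmf (bernoulli_pmf p). \<not> x"
      unfolding AE_measure_pmf_iff using True by (auto simp: set_pmf_iff)
    then show ?thesis unfolding face_perc_def
      by (intro AE_PiM_component) (auto simp: prob_space_measure_pmf)
  qed
  then have "AE \<omega> in (face_perc p :: ('n face \<Rightarrow> bool) measure). \<forall>F. \<not> \<omega> F"
    by (simp add: AE_all_countable)
  with assms(5) have "AE \<omega> in (face_perc p :: ('n face \<Rightarrow> bool) measure). N_inf \<omega> = enat k \<and> (\<forall>F. \<not> \<omega> F)"
    by (auto elim: AE_mp)
  then obtain \<omega> :: "'n face \<Rightarrow> bool" where \<omega>: "N_inf \<omega> = enat k" "\<forall>F. \<not> \<omega> F"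
    using AE_exists[OF prob_space_face_perc] by blast
  have "\<omega> = (\<lambda>_. False)" using \<omega>(2) by auto
  then have "enat k = 0" using \<omega>(1) N_allfalse[where 'n='n] by simp
  then show ?thesis using assms(4) by (simp add: zero_enat_def)
next
  case False
  then have p0: "0 < p" using assms(2) by simp
  have "AE \<omega> in (face_perc p :: ('n face \<Rightarrow> bool) measure). N_inf (Tn (int m) \<omega>) = enat k" for m :: nat
    unfolding Tn_def
    by (rule fe_AE_finite[OF p0 assms(3) finite_inB assms(5)])
  then have "AE \<omega> in (face_perc p :: ('n face \<Rightarrow> bool) measure). \<forall>m::nat. N_inf (Tn (int m) \<omega>) = enat k"
    by (simp add: AE_all_countable)
  with assms(5) have "AE \<omega> in (face_perc p :: ('n face \<Rightarrow> bool) measure).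
      N_inf \<omega> = enat k \<and> (\<forall>m::nat. N_inf (Tn (int m) \<omega>) = enat k)"
    by (auto elim: AE_mp)
  then obtain \<omega> :: "'n face \<Rightarrow> bool" where \<omega>: "N_inf \<omega> = enat k" "\<forall>m::nat. N_inf (Tn (int m) \<omega>) = enat k"
    using AE_exists[OF prob_space_face_perc] by blast
  obtain n where n: "1 \<le> n" "\<forall>C. C \<in> hole_components \<omega> \<longrightarrow> infinite C \<longrightarrow> (\<exists>h\<in>C. h \<inter> Bx n \<noteq> {})"
    using choose_n[OF \<omega>(1)] by blast
  have "N_inf (Tn n \<omega>) \<le> 1" using N_Tn_le1[OF n(1)] n(2) by blast
  moreover have "n = int (nat n)" using n(1) by simp
  ultimately have "enat k \<le> 1" using \<omega>(2)[rule_format, of "nat n"] by metis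
  then show ?thesis using assms(4) by (simp add: one_enat_def)
qed

end
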